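(* A Q-net $f:\mathbb Z^m\to\mathbb R^N$ is a discrete Koenigs net if and only if there exists a function $\nu:\mathbb Z^m\to\mathbb R\setminus\{0\}$ such that for every elementary quadrilateral $(f,f_i,f_{ij},f_j)$, with $M=(ff_{ij})\cap(f_if_j)$ the intersection point of its diagonals, $$\frac{\nu_{ij}}{\nu}=\frac{l(M,f_{ij})}{l(M,f)},\qquad \frac{\nu_j}{\nu_i}=\frac{l(M,f_j)}{l(M,f_i)}.$$ Such a $\nu$ is unique up to multiplication by one nonzero constant on the black points and another nonzero constant on the white points of $\mathbb Z^m$.
   Context: Let $N\ge 3$, $m\ge 2$. For a map $f:\mathbb Z^m\to\mathbb R^N$, write $e_i$ for the $i$-th unit vector of $\mathbb Z^m$, $f=f(u)$, $f_i=f(u+e_i)$, $f_{ij}=f(u+e_i+e_j)$; similarly $\nu_i=\nu(u+e_i)$, $\nu_{ij}=\nu(u+e_i+e_j)$; $\delta_i f=f_i-f$. A Q-net is a map $f:\mathbb Z^m\to\mathbb R^N$ such that for every $u$ and $i\ne j$ the elementary quadrilateral $(f,f_i,f_{ij},f_j)$ is planar; elementary quadrilaterals are assumed non-degenerate: four distinct vertices, no three collinear, and the diagonals $(ff_{ij})$, $(f_if_j)$ meet in a point $M$ different from all vertices. Two planar quadrilaterals $(A,B,C,D)$, $(A^*,B^*,C^*,D^* )$ are dual if corresponding sides are parallel ($A^*B^*\parallel AB$, $B^*C^*\parallel BC$, $C^*D^*\parallel CD$, $D^*A^*\parallel DA$) and non-corresponding diagonals are parallel ($A^*C^*\parallel BD$,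 $B^*D^*\parallel AC$). A Q-net $f$ is a discrete Koenigs net if there is a Q-net $f^*$ (a dual net) such that each $(f^*,f^*_i,f^*_{ij},f^*_j)$ is dual to $(f,f_i,f_{ij},f_j)$, i.e. $\delta_if^*\parallel\delta_if$, $\delta_jf^*\parallel\delta_jf$, $f^*_{ij}-f^*\parallel f_i-f_j$, $f^*_i-f^*_j\parallel f_{ij}-f$. For collinear points $P,Q$, $l(P,Q)$ denotes the directed (signed) length along their line (ratios of such lengths on one line are orientation-independent). A point $u\in\mathbb Z^m$ is black if $u_1+\dots+u_m$ is even, white otherwise. *)

theory Defs
  imports "HOL-Analysis.Analysis"
begin

definition unitv :: "'m::finite \<Rightarrow> int ^ 'm" where
  "unitv i = axis i 1"

definition black :: "int ^ 'm::finite \<Rightarrow> bool" where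
  "black u \<longleftrightarrow> even (\<Sum>k\<in>UNIV. u $ k)"

definition parallel :: "'a::real_vector \<Rightarrow> 'a \<Rightarrow> bool" where
  "parallel x y \<longleftrightarrow> (\<exists>c. x = c *\<^sub>R y \<or> y = c *\<^sub>R x)"

definition line :: "'a::real_vector \<Rightarrow> 'a \<Rightarrow> 'a set" where
  "line P Q = affine hull {P, Q}"

definition nondeg_quad :: "'a::euclidean_space \<Rightarrow> 'a \<Rightarrow> 'a \<Rightarrow> 'a \<Rightarrow> bool" where
  "nondeg_quad A B C D \<longleftrightarrow>
     coplanar {A, B, C, D} \<and> distinct [A, B, C, D] \<and>
     \<not> collinear {A, B, C} \<and> \<not> collinear {B, C, D} \<and>
     \<not> collinear {C, D, A} \<and> \<not> collinear {D, A, B} \<and>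
     (\<exists>M. M \<in> line A C \<and> M \<in> line B D \<and> M \<notin> {A, B, C, D})"

definition diag_point :: "'a::real_vector \<Rightarrow> 'a \<Rightarrow> 'a \<Rightarrow> 'a \<Rightarrow> 'a" where
  "diag_point A B C D = (THE M. M \<in> line A C \<and> M \<in> line B D)"

text \<open>Ratio of directed lengths l(M,P)/l(M,Q) for collinear M, P, Q with M \<noteq> Q.\<close>
definition len_ratio :: "'a::real_vector \<Rightarrow> 'a \<Rightarrow> 'a \<Rightarrow> real" where
  "len_ratio M P Q = (THE r. P - M = r *\<^sub>R (Q - M))"

definition qnet :: "(int ^ 'm::finite \<Rightarrow> real ^ 'n::finite) \<Rightarrow> bool" where
  "qnet f \<longleftrightarrow> (\<forall>u i j. i \<noteq> j \<longrightarrow>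
     nondeg_quad (f u) (f (u + unitv i)) (f (u + unitv i + unitv j)) (f (u + unitv j)))"

definition dual_quad :: "'a::real_vector \<Rightarrow> 'a \<Rightarrow> 'a \<Rightarrow> 'a \<Rightarrow> 'a \<Rightarrow> 'a \<Rightarrow> 'a \<Rightarrow> 'a \<Rightarrow> bool" where
  "dual_quad A B C D A' B' C' D' \<longleftrightarrow>
     parallel (B' - A') (B - A) \<and> parallel (C' - B') (C - B) \<and>
     parallel (D' - C') (D - C) \<and> parallel (A' - D') (A - D) \<and>
     parallel (C' - A') (D - B) \<and> parallel (D' - B') (C - A)"

definition koenigs :: "(int ^ 'm::finite \<Rightarrow> real ^ 'n::finite) \<Rightarrow> bool" where
  "koenigs f \<longleftrightarrow> (\<exists>fs :: int ^ 'm \<Rightarrow> real ^ 'n. qnet fs \<and>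
     (\<forall>u i j. i \<noteq> j \<longrightarrow>
        dual_quad (f u) (f (u + unitv i)) (f (u + unitv i + unitv j)) (f (u + unitv j))
                  (fs u) (fs (u + unitv i)) (fs (u + unitv i + unitv j)) (fs (u + unitv j))))"

definition nu_cond :: "(int ^ 'm::finite \<Rightarrow> real ^ 'n::finite) \<Rightarrow> (int ^ 'm \<Rightarrow> real) \<Rightarrow> bool" where
  "nu_cond f \<nu> \<longleftrightarrow> (\<forall>u. \<nu> u \<noteq> 0) \<and>
     (\<forall>u i j. i \<noteq> j \<longrightarrow>
       (let F = f u; Fi = f (u + unitv i); Fj = f (u + unitv j); Fij = f (u + unitv i + unitv j);
            M = diag_point F Fi Fij Fj
        in \<nu> (u + unitv i + unitv j) / \<nu> u = len_ratio M Fij F \<and>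
           \<nu> (u + unitv j) / \<nu> (u + unitv i) = len_ratio M Fj Fi))"

end

theory Submission
  imports Defs
begin


definition ind2 :: "'a::real_vector \<Rightarrow> 'a \<Rightarrow> bool" where
  "ind2 x y \<longleftrightarrow> (\<forall>s t. s *\<^sub>R x + t *\<^sub>R y = 0 \<longrightarrow> s = 0 \<and> t = 0)"

lemma ind2_D: "ind2 x y \<Longrightarrow> s *\<^sub>R x + t *\<^sub>R y = 0 \<Longrightarrow> s = 0 \<and> t = 0"
  unfolding ind2_def by blast

lemma ind2_sym: assumes "ind2 x y" shows "ind2 y x"
  unfolding ind2_def
proof (intro allI impI)
  fix s t assume "s *\<^sub>R y + t *\<^sub>R x = 0"
  hence "t *\<^sub>R x + s *\<^sub>R y = 0" by (simp add: add.commute)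
  thus "s = 0 \<and> t = 0" using ind2_D[OF assms] by blast
qed

lemma ind2_nz: assumes i: "ind2 x y" shows "x \<noteq> 0 \<and> y \<noteq> 0"
proof (intro conjI notI)
  assume "x = 0"
  thus False using i[unfolded ind2_def, rule_format, of 1 0] by simp
next
  assume "y = 0"
  thus False using i[unfolded ind2_def, rule_format, of 0 1] by simp
qed

lemma ind2_eq: assumes "ind2 x y" "s *\<^sub>R x + t *\<^sub>R y = s' *\<^sub>R x + t' *\<^sub>R y"
  shows "s = s' \<and> t = t'"
proof -
  have "(s - s') *\<^sub>R x + (t - t') *\<^sub>R y = 0" using assms(2)
    by (simp add: algebra_simps)
  thus ?thesis using ind2_D[OF assms(1)] by force
qed

lemma not_col3:
  assumes i: "ind2 x y" and "p \<noteq> q" "r \<noteq> 0"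
  shows "\<not> collinear {M + p *\<^sub>R x, M + q *\<^sub>R x, M + r *\<^sub>R y}"
proof
  assume "collinear {M + p *\<^sub>R x, M + q *\<^sub>R x, M + r *\<^sub>R y}"
  then obtain w where w: "\<forall>a\<in>{M + p *\<^sub>R x, M + q *\<^sub>R x, M + r *\<^sub>R y}. \<forall>b\<in>{M + p *\<^sub>R x, M + q *\<^sub>R x, M + r *\<^sub>R y}. \<exists>c. a - b = c *\<^sub>R w"
    unfolding collinear_def by blast
  then obtain c1 where c1: "(M + p *\<^sub>R x) - (M + q *\<^sub>R x) = c1 *\<^sub>R w" by blast
  from w obtain c2 where c2: "(M + r *\<^sub>R y) - (M + q *\<^sub>R x) = c2 *\<^sub>R w" by blast
  have e1: "(p - q) *\<^sub>R x = c1 *\<^sub>R w" using c1 by (simp add: algebra_simps)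
  have e2: "r *\<^sub>R y - q *\<^sub>R x = c2 *\<^sub>R w" using c2 by (simp add: algebra_simps)
  have "c1 \<noteq> 0" using e1 ind2_nz[OF i] \<open>p \<noteq> q\<close> by auto
  hence "w = ((p - q)/c1) *\<^sub>R x" using arg_cong[OF e1, of "\<lambda>z. (1/c1) *\<^sub>R z"] by simp
  hence "r *\<^sub>R y - q *\<^sub>R x = (c2 * ((p - q)/c1)) *\<^sub>R x" using e2 by simp
  hence "(- q - c2 * ((p - q)/c1)) *\<^sub>R x + r *\<^sub>R y = 0" by (simp add: algebra_simps)
  thus False using ind2_D[OF i] \<open>r \<noteq> 0\<close> by blast
qed

lemma comb2: fixes M x :: "'a::real_vector" shows "s + t = 1 \<Longrightarrow> s *\<^sub>R (M + a *\<^sub>R x) + t *\<^sub>R (M + b *\<^sub>R x) = M + (s * a + t * b) *\<^sub>R x"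
proof -
  assume "s + t = 1"
  have "s *\<^sub>R M + t *\<^sub>R M = (s + t) *\<^sub>R M" by (rule scaleR_add_left[symmetric])
  hence "s *\<^sub>R M + t *\<^sub>R M = M" using \<open>s + t = 1\<close> by simp
  thus ?thesis by (simp add: algebra_simps)
qed

definition qrep where
  "qrep A B C D M x y a1 a2 b1 b2 \<longleftrightarrow> ind2 x y \<and> a1 \<noteq> 0 \<and> a2 \<noteq> 0 \<and> b1 \<noteq> 0 \<and> b2 \<noteq> 0 \<and>
     a1 \<noteq> a2 \<and> b1 \<noteq> b2 \<and> A = M + a1 *\<^sub>R x \<and> C = M + a2 *\<^sub>R x \<and> B = M + b1 *\<^sub>R y \<and> D = M + b2 *\<^sub>R y"

lemma in_line: assumes "a1 \<noteq> a2" shows "M \<in> line (M + a1 *\<^sub>R x) (M + a2 *\<^sub>R x)"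
proof -
  have d: "a2 - a1 \<noteq> 0" using assms by simp
  have s1: "a2/(a2-a1) + (-a1/(a2-a1)) = 1" using d by (simp add: diff_divide_distrib[symmetric])
  have s2: "a2/(a2-a1) * a1 + (-a1/(a2-a1)) * a2 = 0" using assms by (simp add: field_simps)
  have Meq: "M = (a2/(a2-a1)) *\<^sub>R (M + a1 *\<^sub>R x) + (-a1/(a2-a1)) *\<^sub>R (M + a2 *\<^sub>R x)"
    using comb2[OF s1, of M a1 x a2] s2 by simp
  show ?thesis unfolding line_def affine_hull_2 mem_Collect_eq
    by (rule exI, rule exI, rule conjI[OF Meq s1])
qed

lemma line_param: "X \<in> line (M + a1 *\<^sub>R x) (M + a2 *\<^sub>R x) \<Longrightarrow> \<exists>s. X = M + s *\<^sub>R x"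
proof -
  assume "X \<in> line (M + a1 *\<^sub>R x) (M + a2 *\<^sub>R x)"
  hence "\<exists>u v. X = u *\<^sub>R (M + a1 *\<^sub>R x) + v *\<^sub>R (M + a2 *\<^sub>R x) \<and> u + v = 1"
    unfolding line_def affine_hull_2 mem_Collect_eq .
  then obtain u v where uv: "u + v = 1" "X = u *\<^sub>R (M + a1 *\<^sub>R x) + v *\<^sub>R (M + a2 *\<^sub>R x)"
    by blast
  have "X = M + (u * a1 + v * a2) *\<^sub>R x" unfolding uv(2) by (rule comb2[OF uv(1)])
  thus ?thesis by (rule exI)
qed

lemma qrep_nondeg:
  assumes "qrep A B C D M x y a1 a2 b1 b2"
  shows "nondeg_quad A B C D"
proof -
  note q = assms[unfolded qrep_def]
  have i: "ind2 x y" and iy: "ind2 y x" using q ind2_sym by auto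
  have nz: "x \<noteq> 0" "y \<noteq> 0" using ind2_nz[OF i] by auto
  have neq: "M + s *\<^sub>R x \<noteq> M + t *\<^sub>R y" if "s \<noteq> 0" for s t
    using ind2_eq[OF i, of s 0 0 t] that by auto
  have neq2: "M + s *\<^sub>R y \<noteq> M + t *\<^sub>R x" if "s \<noteq> 0" for s t
    using ind2_eq[OF iy, of s 0 0 t] that by auto
  have cop: "coplanar {A, B, C, D}"
  proof -
    have "P \<in> affine hull {M, M + x, M + y}" if "P = M + s *\<^sub>R x + t *\<^sub>R y" for P s t
    proof -
      have "P = (1 - s - t) *\<^sub>R M + s *\<^sub>R (M + x) + t *\<^sub>R (M + y)"
        using that by (simp add: algebra_simps)
      thus ?thesis unfolding affine_hull_3 by force
    qed
    hence "{A, B, C, D} \<subseteq> affine hull {M, M + x, M + y}" using q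
      by (metis (no_types, lifting) add.right_neutral empty_subsetI insert_subset scaleR_zero_left)
    thus ?thesis unfolding coplanar_def by blast
  qed
  have dis: "distinct [A, B, C, D]"
    using q nz neq[of a1] neq[of a2] neq2[of b1] neq2[of b2] by auto
  have c1: "\<not> collinear {A, B, C}" using not_col3[OF i, of a1 a2 b1 M] q
    by (simp add: insert_commute)
  have c2: "\<not> collinear {B, C, D}" using not_col3[OF iy, of b1 b2 a2 M] q
    by (simp add: insert_commute)
  have c3: "\<not> collinear {C, D, A}" using not_col3[OF i, of a2 a1 b2 M] q
    by (simp add: insert_commute)
  have c4: "\<not> collinear {D, A, B}" using not_col3[OF iy, of b2 b1 a1 M] q
    by (simp add: insert_commute)
  have "M \<in> line A C" "M \<in> line B D" using in_line q by auto
  moreover have "M \<notin> {A, B, C, D}" using q nz by auto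
  ultimately show ?thesis unfolding nondeg_quad_def using cop dis c1 c2 c3 c4 by blast
qed

lemma qrep_diag:
  assumes "qrep A B C D M x y a1 a2 b1 b2"
  shows "diag_point A B C D = M"
proof -
  note q = assms[unfolded qrep_def]
  have i: "ind2 x y" using q by auto
  have "X = M" if "X \<in> line A C" "X \<in> line B D" for X
  proof -
    have "X \<in> line (M + a1 *\<^sub>R x) (M + a2 *\<^sub>R x)" using that(1) q by simp
    then obtain s where s: "X = M + s *\<^sub>R x" using line_param by blast
    have "X \<in> line (M + b1 *\<^sub>R y) (M + b2 *\<^sub>R y)" using that(2) q by simp
    then obtain t where t: "X = M + t *\<^sub>R y" using line_param by blast
    have "s *\<^sub>R x + 0 *\<^sub>R y = 0 *\<^sub>R x + t *\<^sub>R y" using s t by simp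
    hence "s = 0" using ind2_eq[OF i] by blast
    thus ?thesis using s by simp
  qed
  moreover have "M \<in> line A C \<and> M \<in> line B D" using in_line q by auto
  ultimately show ?thesis unfolding diag_point_def by (metis (no_types, lifting) the_equality)
qed

lemma len_ratio_val:
  assumes "x \<noteq> 0" "a1 \<noteq> 0"
  shows "len_ratio M (M + a2 *\<^sub>R x) (M + a1 *\<^sub>R x) = a2 / a1"
  unfolding len_ratio_def
proof (rule the_equality)
  show "M + a2 *\<^sub>R x - M = (a2 / a1) *\<^sub>R (M + a1 *\<^sub>R x - M)" using assms by simp
next
  fix r assume "M + a2 *\<^sub>R x - M = r *\<^sub>R (M + a1 *\<^sub>R x - M)"
  hence "(a2 - r * a1) *\<^sub>R x = 0" by (simp add: algebra_simps)
  hence "a2 = r * a1" using assms by simp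
  thus "r = a2 / a1" using assms by (simp add: field_simps)
qed

lemma nondeg_rep:
  assumes "nondeg_quad A B C D"
  shows "\<exists>M x y a1 a2 b1 b2. qrep A B C D M x y a1 a2 b1 b2"
proof -
  note nd = assms[unfolded nondeg_quad_def]
  obtain M where M: "M \<in> line A C" "M \<in> line B D" "M \<notin> {A, B, C, D}" using nd by blast
  obtain s t where st: "s + t = 1" "M = s *\<^sub>R A + t *\<^sub>R C"
    using M(1) unfolding line_def affine_hull_2 by blast
  obtain s' t' where st': "s' + t' = 1" "M = s' *\<^sub>R B + t' *\<^sub>R D"
    using M(2) unfolding line_def affine_hull_2 by blast
  define x where "x = A - C"
  define y where "y = B - D"
  have sA: "s = 1 - t" using st by simp
  have sB: "s' = 1 - t'" using st' by simp
  have M1: "M = (1 - t) *\<^sub>R A + t *\<^sub>R C" using st sA by simp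
  have M2: "M = (1 - t') *\<^sub>R B + t' *\<^sub>R D" using st' sB by simp
  have A: "A = M + t *\<^sub>R x" unfolding M1 x_def by (simp add: algebra_simps)
  have C: "C = M + (- s) *\<^sub>R x" unfolding M1 x_def sA by (simp add: algebra_simps)
  have B: "B = M + t' *\<^sub>R y" unfolding M2 y_def by (simp add: algebra_simps)
  have D: "D = M + (- s') *\<^sub>R y" unfolding M2 y_def sB by (simp add: algebra_simps)
  have "t \<noteq> 0" using A M(3) by auto
  moreover have "- s \<noteq> 0" using C M(3) by auto
  moreover have "t' \<noteq> 0" using B M(3) by auto
  moreover have "- s' \<noteq> 0" using D M(3) by auto
  moreover have "t \<noteq> - s" "t' \<noteq> - s'" using st st' by auto
  moreover have "ind2 x y"
    unfolding ind2_def
  proof (intro allI impI)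
    fix p q assume pq: "p *\<^sub>R x + q *\<^sub>R y = 0"
    show "p = 0 \<and> q = 0"
    proof (cases "q = 0")
      case True
      hence "p *\<^sub>R x = 0" using pq by simp
      moreover have "x \<noteq> 0" using nd unfolding x_def by auto
      ultimately show ?thesis using True by simp
    next
      case False
      hence yx: "y = (- p / q) *\<^sub>R x" using pq
        by (metis (no_types, lifting) add.commute add_eq_0_iff2 divide_inverse_commute
          inverse_eq_divide mult_minus_left scaleR_minus_left scaleR_right_imp_eq scaleR_scaleR
          scaleR_zero_left eq_vector_fraction_iff)
      have "collinear {A, B, C}"
        unfolding collinear_alt
        apply (rule exI[of _ M], rule exI[of _ x])
      proof -
        have "B = M + (t' * (- p / q)) *\<^sub>R x" using B yx by simp
        thus "\<forall>z\<in>{A, B, C}. \<exists>c. z = M + c *\<^sub>R x" using A C by blast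
      qed
      thus ?thesis using nd by blast
    qed
  qed
  ultimately have "qrep A B C D M x y t (- s) t' (- s')"
    unfolding qrep_def using A B C D by blast
  thus ?thesis by blast
qed

lemma par_lem:
  assumes i: "ind2 x y" and r: "r \<noteq> 0" and p: "parallel (p *\<^sub>R x + q *\<^sub>R y) (r *\<^sub>R y)"
  shows "p = 0"
proof -
  obtain c where "p *\<^sub>R x + q *\<^sub>R y = c *\<^sub>R (r *\<^sub>R y) \<or> r *\<^sub>R y = c *\<^sub>R (p *\<^sub>R x + q *\<^sub>R y)"
    using p unfolding parallel_def by blast
  thus ?thesis
  proof
    assume "p *\<^sub>R x + q *\<^sub>R y = c *\<^sub>R (r *\<^sub>R y)"
    hence "p *\<^sub>R x + q *\<^sub>R y = 0 *\<^sub>R x + (c * r) *\<^sub>R y" by simp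
    thus ?thesis using ind2_eq[OF i] by blast
  next
    assume "r *\<^sub>R y = c *\<^sub>R (p *\<^sub>R x + q *\<^sub>R y)"
    hence "(c * p) *\<^sub>R x + (c * q) *\<^sub>R y = 0 *\<^sub>R x + r *\<^sub>R y" by (simp add: algebra_simps)
    hence "c * p = 0" "c * q = r" using ind2_eq[OF i] by blast+
    thus ?thesis using r by auto
  qed
qed

lemma fwd_quad:
  assumes q: "qrep A B C D M x y a1 a2 b1 b2"
    and e1: "B' - A' = ci *\<^sub>R (B - A)" and e2: "C' - B' = cji *\<^sub>R (C - B)"
    and e3: "D' - A' = cj *\<^sub>R (D - A)" and e4: "C' - D' = cij *\<^sub>R (C - D)"
    and p1: "parallel (C' - A') (D - B)" and p2: "parallel (D' - B') (C - A)"
  shows "cji * a2 = ci * a1 \<and> cij * a2 = cj * a1 \<and> cj * b2 = ci * b1"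
proof -
  note qq = q[unfolded qrep_def]
  have i: "ind2 x y" and iy: "ind2 y x" using qq ind2_sym by auto
  have DB: "D - B = (b2 - b1) *\<^sub>R y" using qq by (simp add: algebra_simps)
  have CA: "C - A = (a2 - a1) *\<^sub>R x" using qq by (simp add: algebra_simps)
  have "C' - A' = (C' - B') + (B' - A')" by simp
  also have "\<dots> = cji *\<^sub>R (C - B) + ci *\<^sub>R (B - A)" using e1 e2 by simp
  also have "\<dots> = (cji * a2 - ci * a1) *\<^sub>R x + (ci * b1 - cji * b1) *\<^sub>R y"
    using qq by (simp add: algebra_simps)
  finally have r1: "C' - A' = (cji * a2 - ci * a1) *\<^sub>R x + (ci * b1 - cji * b1) *\<^sub>R y" .
  have "C' - A' = (C' - D') + (D' - A')" by simp
  also have "\<dots> = cij *\<^sub>R (C - D) + cj *\<^sub>R (D - A)" using e3 e4 by simp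
  also have "\<dots> = (cij * a2 - cj * a1) *\<^sub>R x + (cj * b2 - cij * b2) *\<^sub>R y"
    using qq by (simp add: algebra_simps)
  finally have r2: "C' - A' = (cij * a2 - cj * a1) *\<^sub>R x + (cj * b2 - cij * b2) *\<^sub>R y" .
  have "D' - B' = (D' - A') - (B' - A')" by simp
  also have "\<dots> = cj *\<^sub>R (D - A) - ci *\<^sub>R (B - A)" using e1 e3 by simp
  also have "\<dots> = (cj * b2 - ci * b1) *\<^sub>R y + (ci * a1 - cj * a1) *\<^sub>R x"
    using qq by (simp add: algebra_simps)
  finally have r3: "D' - B' = (cj * b2 - ci * b1) *\<^sub>R y + (ci * a1 - cj * a1) *\<^sub>R x" .
  have nb: "b2 - b1 \<noteq> 0" and na: "a2 - a1 \<noteq> 0" using qq by auto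
  have "parallel ((cji * a2 - ci * a1) *\<^sub>R x + (ci * b1 - cji * b1) *\<^sub>R y) ((b2 - b1) *\<^sub>R y)"
    using p1 r1 DB by simp
  from par_lem[OF i nb this] have "cji * a2 - ci * a1 = 0" .
  moreover have "parallel ((cij * a2 - cj * a1) *\<^sub>R x + (cj * b2 - cij * b2) *\<^sub>R y) ((b2 - b1) *\<^sub>R y)"
    using p1 r2 DB by simp
  from par_lem[OF i nb this] have "cij * a2 - cj * a1 = 0" .
  moreover have "parallel ((cj * b2 - ci * b1) *\<^sub>R y + (ci * a1 - cj * a1) *\<^sub>R x) ((a2 - a1) *\<^sub>R x)"
    using p2 r3 CA by simp
  from par_lem[OF iy na this] have "cj * b2 - ci * b1 = 0" .
  ultimately show ?thesis by simp
qed

lemma par_scal: "parallel (c *\<^sub>R v) v"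
  unfolding parallel_def by blast

lemma par_same: "t \<noteq> 0 \<Longrightarrow> parallel (s *\<^sub>R y) (t *\<^sub>R y)"
  unfolding parallel_def by (rule exI[of _ "s/t"]) simp

lemma bwd_quad:
  assumes q: "qrep A B C D M x y a1 a2 b1 b2"
    and nz: "n \<noteq> 0" "ni \<noteq> 0" "nj \<noteq> 0" "nij \<noteq> 0"
    and r1: "nij / n = a2 / a1" and r2: "nj / ni = b2 / b1"
    and eB: "B' = A' + (1/(n*ni)) *\<^sub>R (B - A)" and eC: "C' = B' + (1/(ni*nij)) *\<^sub>R (C - B)"
    and eD: "D' = A' + (1/(n*nj)) *\<^sub>R (D - A)"
  shows "C' = D' + (1/(nj*nij)) *\<^sub>R (C - D) \<and> nondeg_quad A' B' C' D' \<and> dual_quad A B C D A' B' C' D'"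
proof -
  note qq = q[unfolded qrep_def]
  have i: "ind2 x y" and iy: "ind2 y x" using qq ind2_sym by auto
  define k where "k = 1/(n*ni)"
  have k0: "k \<noteq> 0" using nz unfolding k_def by simp
  have nij: "nij = n * a2 / a1" using r1 nz qq by (simp add: field_simps)
  have nj: "nj = ni * b2 / b1" using r2 nz qq by (simp add: field_simps)
  have c2: "1/(ni*nij) = k * (a1/a2)" unfolding k_def nij using qq nz by (simp add: field_simps)
  have c3: "1/(n*nj) = k * (b1/b2)" unfolding k_def nj using qq nz by (simp add: field_simps)
  have c4: "1/(nj*nij) = k * (a1*b1/(a2*b2))" unfolding k_def nj nij using qq nz by (simp add: field_simps)
  define M' where "M' = A' + (k * b1) *\<^sub>R y"
  have A': "A' = M' + (- k * b1) *\<^sub>R y" unfolding M'_def by simp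
  have B': "B' = M' + (- k * a1) *\<^sub>R x" unfolding M'_def eB k_def[symmetric] using qq
    by (simp add: algebra_simps)
  have C': "C' = M' + (- k * b1 * (a1/a2)) *\<^sub>R y"
  proof -
    have "C' = A' + k *\<^sub>R (B - A) + (k * (a1/a2)) *\<^sub>R (C - B)" using eC eB c2 k_def by simp
    also have "\<dots> = A' + (k*b1) *\<^sub>R y - (k*a1) *\<^sub>R x + (k * (a1/a2) * a2) *\<^sub>R x - (k*b1 * (a1/a2)) *\<^sub>R y"
      using qq by (simp add: algebra_simps)
    also have "k * (a1/a2) * a2 = k * a1" using qq by simp
    finally show ?thesis unfolding M'_def by (simp add: algebra_simps)
  qed
  have D': "D' = M' + (- k * a1 * (b1/b2)) *\<^sub>R x"
  proof -
    have "D' = A' + (k * (b1/b2)) *\<^sub>R (D - A)" using eD c3 by simp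
    also have "\<dots> = A' + (k * (b1/b2) * b2) *\<^sub>R y - (k*a1 * (b1/b2)) *\<^sub>R x"
      using qq by (simp add: algebra_simps)
    also have "k * (b1/b2) * b2 = k * b1" using qq by simp
    finally show ?thesis unfolding M'_def by (simp add: algebra_simps)
  qed
  have eq4: "C' = D' + (1/(nj*nij)) *\<^sub>R (C - D)"
  proof -
    have "D' + (1/(nj*nij)) *\<^sub>R (C - D) = M' + (- k * a1 * (b1/b2)) *\<^sub>R x
        + (k * (a1*b1/(a2*b2))) *\<^sub>R ((a2 *\<^sub>R x) - (b2 *\<^sub>R y))"
      using D' c4 qq by (simp add: algebra_simps)
    also have "\<dots> = M' + (- k * a1 * (b1/b2) + k * (a1*b1/(a2*b2)) * a2) *\<^sub>R x
        - (k * (a1*b1/(a2*b2)) * b2) *\<^sub>R y" by (simp add: algebra_simps)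
    also have "- k * a1 * (b1/b2) + k * (a1*b1/(a2*b2)) * a2 = 0" using qq by (simp add: field_simps)
    also have "k * (a1*b1/(a2*b2)) * b2 = k * b1 * (a1/a2)" using qq by (simp add: field_simps)
    finally show ?thesis using C' by simp
  qed
  have q': "qrep A' B' C' D' M' y x (- k * b1) (- k * b1 * (a1/a2)) (- k * a1) (- k * a1 * (b1/b2))"
    unfolding qrep_def using iy A' B' C' D' k0 qq by (auto simp: field_simps)
  have nd: "nondeg_quad A' B' C' D'" using qrep_nondeg[OF q'] .
  have d1: "parallel (B' - A') (B - A)" using eB par_scal by simp
  have d2: "parallel (C' - B') (C - B)" using eC par_scal by simp
  have d3: "parallel (D' - C') (D - C)"
  proof -
    have "D' - C' = (1/(nj*nij)) *\<^sub>R (D - C)" using eq4 by (simp add: algebra_simps)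
    thus ?thesis using par_scal by simp
  qed
  have d4: "parallel (A' - D') (A - D)"
  proof -
    have "A' - D' = (1/(n*nj)) *\<^sub>R (A - D)" using eD by (simp add: algebra_simps)
    thus ?thesis using par_scal by simp
  qed
  have d5: "parallel (C' - A') (D - B)"
  proof -
    have e: "C' - A' = (- k * b1 * (a1/a2) + k * b1) *\<^sub>R y" using C' A' by (simp add: algebra_simps)
    have f: "D - B = (b2 - b1) *\<^sub>R y" using qq by (simp add: algebra_simps)
    show ?thesis unfolding e f by (rule par_same) (use qq in simp)
  qed
  have d6: "parallel (D' - B') (C - A)"
  proof -
    have e: "D' - B' = (- k * a1 * (b1/b2) + k * a1) *\<^sub>R x" using D' B' by (simp add: algebra_simps)
    have f: "C - A = (a2 - a1) *\<^sub>R x" using qq by (simp add: algebra_simps)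
    show ?thesis unfolding e f by (rule par_same) (use qq in simp)
  qed
  have dq: "dual_quad A B C D A' B' C' D'" unfolding dual_quad_def by (intro conjI d1 d2 d3 d4 d5 d6)
  show ?thesis by (intro conjI eq4 nd dq)
qed



lemma axis_add: "axis k (a::int) + axis k b = axis k (a + b)"
  by (simp add: vec_eq_iff axis_def)

lemma axis_zero [simp]: "axis k (0::int) = 0"
  by (simp add: vec_eq_iff axis_def)

lemma black_add: "black (u + unitv i) \<longleftrightarrow> \<not> black u"
proof -
  have "(\<Sum>k\<in>UNIV. (u + unitv i) $ k) = (\<Sum>k\<in>UNIV. u $ k) + (\<Sum>k\<in>UNIV. (if k = i then 1 else 0))"
    by (simp add: unitv_def axis_def sum.distrib)
  also have "(\<Sum>k\<in>UNIV. (if k = i then 1 else 0)) = (1::int)" by simp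
  finally show ?thesis unfolding black_def by simp
qed

lemma sum_up: "0 \<le> n \<Longrightarrow> (\<Sum>t\<in>{0..<n+1}. f t) = (\<Sum>t\<in>{0..<n}. f t) + (f (n::int) :: 'a::ab_group_add)"
proof -
  assume "0 \<le> n"
  hence "{0..<n+1} = insert n {0..<n}" by auto
  thus ?thesis by (simp add: add.commute)
qed

lemma sum_dn: "n < 0 \<Longrightarrow> (\<Sum>t\<in>{n..<0}. f t) = (\<Sum>t\<in>{n+1..<0}. f t) + (f (n::int) :: 'a::ab_group_add)"
proof -
  assume "n < 0"
  hence "{n..<0} = insert n {n+1..<0}" by auto
  thus ?thesis by (simp add: add.commute)
qed

lemma potential:
  fixes w :: "'m::finite \<Rightarrow> int^'m \<Rightarrow> 'a::ab_group_add"
  assumes coc: "\<And>u i j. w i u + w j (u + unitv i) = w j u + w i (u + unitv j)"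
  shows "\<exists>F. \<forall>u i. F (u + unitv i) = F u + w i u"
proof -
  have "\<exists>F. \<forall>u. \<forall>i\<in>S. F (u + unitv i) = F u + w i u" if "finite S" for S
    using that
  proof (induction S rule: finite_induct)
    case empty show ?case by auto
  next
    case (insert k S)
    then obtain F where F: "\<forall>u. \<forall>i\<in>S. F (u + unitv i) = F u + w i u" by blast
    define h where "h v n = F v + (if 0 \<le> n then (\<Sum>t\<in>{0..<n}. w k (v + axis k t))
         else - (\<Sum>t\<in>{n..<0}. w k (v + axis k t)))" for v and n::int
    have hstep: "h v (n+1) = h v n + w k (v + axis k n)" for v n
    proof (cases "0 \<le> n")
      case True
      thus ?thesis unfolding h_def using sum_up[OF True, of "\<lambda>t. w k (v + axis k t)"] by simp
    next
      case False
      have a: "h v (n+1) = F v - (\<Sum>t\<in>{n+1..<0}. w k (v + axis k t))"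
        unfolding h_def using False by auto
      have b: "h v n = F v - ((\<Sum>t\<in>{n+1..<0}. w k (v + axis k t)) + w k (v + axis k n))"
        unfolding h_def using False sum_dn[of n "\<lambda>t. w k (v + axis k t)"] by simp
      show ?thesis unfolding a b by (simp add: algebra_simps)
    qed
    have hi: "h (v + unitv i) n = h v n + w i (v + axis k n)" if "i \<in> S" for v n i
    proof (induction n rule: int_induct[where k=0])
      case base
      then show ?case using F that by (simp add: h_def)
    next
      case (step1 n)
      have c: "w i (v + axis k n) + w k (v + axis k n + unitv i) = w k (v + axis k n) + w i (v + axis k n + unitv k)"
        by (rule coc)
      have e1: "v + axis k n + unitv i = v + unitv i + axis k n" by (simp add: algebra_simps)
      have e2: "v + axis k n + unitv k = v + axis k (n+1)" unfolding unitv_def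
        by (simp add: add.assoc axis_add)
      show ?case using step1(2) c e1 e2 hstep[of "v + unitv i" n] hstep[of v n]
        by (simp add: algebra_simps)
    next
      case (step2 n)
      have c: "w i (v + axis k (n-1)) + w k (v + axis k (n-1) + unitv i) = w k (v + axis k (n-1)) + w i (v + axis k (n-1) + unitv k)"
        by (rule coc)
      have e1: "v + axis k (n-1) + unitv i = v + unitv i + axis k (n-1)" by (simp add: algebra_simps)
      have e2: "v + axis k (n-1) + unitv k = v + axis k n" unfolding unitv_def
        by (simp add: add.assoc axis_add)
      have E2: "h (v + unitv i) n = h (v + unitv i) (n-1) + w k (v + unitv i + axis k (n-1))"
        using hstep[of "v + unitv i" "n-1"] by simp
      have E3: "h v n = h v (n-1) + w k (v + axis k (n-1))" using hstep[of v "n-1"] by simp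
      have "h (v + unitv i) (n-1) + w k (v + unitv i + axis k (n-1)) = h (v + unitv i) n" using E2 by simp
      also have "\<dots> = h v n + w i (v + axis k n)" using step2(2) .
      also have "\<dots> = h v (n-1) + (w k (v + axis k (n-1)) + w i (v + axis k n))" using E3 by (simp add: add.assoc)
      also have "\<dots> = h v (n-1) + (w i (v + axis k (n-1)) + w k (v + unitv i + axis k (n-1)))"
        using c e1 e2 by simp
      finally show ?case by (simp add: add.assoc[symmetric])
    qed
    define G where "G u = h (\<chi> l. if l = k then 0 else u$l) (u$k)" for u
    have "G (u + unitv i) = G u + w i u" if "i \<in> insert k S" for u i
    proof (cases "i = k")
      case True
      have p: "(\<chi> l. if l = k then 0 else (u + unitv i)$l) = (\<chi> l. if l = k then 0 else u$l)"
        using True by (simp add: vec_eq_iff unitv_def axis_def)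
      have pu: "(\<chi> l. if l = k then 0 else u$l) + axis k (u$k) = u"
        by (simp add: vec_eq_iff axis_def)
      show ?thesis unfolding G_def p using True hstep[of _ "u$k"] pu
        by (simp add: unitv_def)
    next
      case False
      hence iS: "i \<in> S" using that by simp
      have p: "(\<chi> l. if l = k then 0 else (u + unitv i)$l) = (\<chi> l. if l = k then 0 else u$l) + unitv i"
        using False by (simp add: vec_eq_iff unitv_def axis_def)
      have pu: "(\<chi> l. if l = k then 0 else u$l) + axis k (u$k) = u"
        by (simp add: vec_eq_iff axis_def)
      have uk: "(u + unitv i) $ k = u $ k" using False by (simp add: unitv_def axis_def)
      show ?thesis unfolding G_def p uk using hi[OF iS] pu by simp
    qed
    thus ?case by blast
  qed
  from this[of UNIV] show ?thesis by simp
qed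

lemma lat_induct:
  fixes P :: "int^'m::finite \<Rightarrow> bool"
  assumes "P 0" and up: "\<And>u i. P u \<Longrightarrow> P (u + unitv i)" and dn: "\<And>u i. P u \<Longrightarrow> P (u - unitv i)"
  shows "P u"
proof -
  have "\<forall>u. (\<forall>l. l \<notin> S \<longrightarrow> u$l = 0) \<longrightarrow> P u" if "finite S" for S
    using that
  proof (induction S rule: finite_induct)
    case empty
    have "u = 0" if "\<forall>l. u$l = 0" for u :: "int^'m" using that by (simp add: vec_eq_iff)
    then show ?case using assms(1) by auto
  next
    case (insert k S)
    show ?case
    proof (intro allI impI)
      fix u :: "int^'m" assume u: "\<forall>l. l \<notin> insert k S \<longrightarrow> u $ l = 0"
      define p where "p = (\<chi> l. if l = k then 0 else u$l)"
      have "P p" using insert.IH u unfolding p_def by auto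
      have "P (p + axis k n)" for n
      proof (induction n rule: int_induct[where k=0])
        case base
        have "p + axis k 0 = p" by (simp add: vec_eq_iff axis_def)
        then show ?case using \<open>P p\<close> by simp
      next
        case (step1 n)
        have "p + axis k (n+1) = p + axis k n + unitv k" unfolding unitv_def
          by (simp add: add.assoc axis_add)
        then show ?case using up[OF step1(2), of k] by (simp add: add.assoc)
      next
        case (step2 n)
        have "p + axis k (n-1) = p + axis k n - unitv k" unfolding unitv_def
          by (simp add: vec_eq_iff axis_def)
        then show ?case using dn[OF step2(2), of k] by (simp add: add_diff_eq)
      qed
      moreover have "p + axis k (u$k) = u" unfolding p_def by (simp add: vec_eq_iff axis_def)
      ultimately show "P u" by metis
    qed
  qed
  from this[of UNIV] show ?thesis by simp
qed

typedef nzr = "{x::real. x \<noteq> 0}" morphisms rn Abs_nzr by (rule exI[of _ 1]) simp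

setup_lifting type_definition_nzr

instantiation nzr :: ab_group_add
begin
lift_definition zero_nzr :: nzr is 1 by simp
lift_definition plus_nzr :: "nzr \<Rightarrow> nzr \<Rightarrow> nzr" is "(*)" by simp
lift_definition minus_nzr :: "nzr \<Rightarrow> nzr \<Rightarrow> nzr" is "(/)" by simp
lift_definition uminus_nzr :: "nzr \<Rightarrow> nzr" is inverse by simp
instance by standard (transfer, simp add: field_simps)+
end

lemma mult_potential:
  fixes W :: "'m::finite \<Rightarrow> int^'m \<Rightarrow> real"
  assumes nz: "\<And>i u. W i u \<noteq> 0"
    and coc: "\<And>u i j. W i u * W j (u + unitv i) = W j u * W i (u + unitv j)"
  shows "\<exists>F. (\<forall>u. F u \<noteq> 0) \<and> (\<forall>u i. F (u + unitv i) = F u * W i u)"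
proof -
  define w where "w i u = Abs_nzr (W i u)" for i u
  have rw: "rn (w i u) = W i u" for i u unfolding w_def using nz by (simp add: Abs_nzr_inverse)
  have "w i u + w j (u + unitv i) = w j u + w i (u + unitv j)" for u i j
    by (simp add: rn_inject[symmetric] plus_nzr.rep_eq rw coc)
  from potential[of w, OF this] obtain G where G: "\<forall>u i. G (u + unitv i) = G u + w i u" by blast
  have "\<forall>u. rn (G u) \<noteq> 0" using rn by simp
  moreover have "\<forall>u i. rn (G (u + unitv i)) = rn (G u) * W i u"
    using G by (simp add: plus_nzr.rep_eq rw)
  ultimately show ?thesis by (intro exI[of _ "\<lambda>u. rn (G u)"]) simp
qed

lemma other_idx:
  assumes "CARD('m::finite) \<ge> 2" shows "\<exists>j::'m. j \<noteq> k"
proof (rule ccontr)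
  assume "\<not> (\<exists>j::'m. j \<noteq> k)"
  hence "(UNIV::'m set) = {k}" by auto
  hence "CARD('m) = 1" by (metis card.empty card_insert_disjoint empty_iff finite.emptyI One_nat_def)
  thus False using assms by simp
qed

lemma black0: "black (0::int^'m::finite)"
  unfolding black_def by simp

lemma parity:
  fixes \<rho> :: "int^'m::finite \<Rightarrow> real"
  assumes c2: "CARD('m) \<ge> 2"
    and h1: "\<And>u i j. i \<noteq> j \<Longrightarrow> \<rho> (u + unitv i + unitv j) = \<rho> u"
    and h2: "\<And>u i j. i \<noteq> j \<Longrightarrow> \<rho> (u + unitv j) = \<rho> (u + unitv i)"
  shows "\<forall>u. \<rho> u = (if black u then \<rho> 0 else \<rho> (unitv i0))"
proof -
  have F: "\<rho> (u + unitv k) = \<rho> (u + unitv l)" for u k l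
    using h2[of k l u] by (cases "k = l") auto
  have E: "\<rho> (u + unitv k + unitv l) = \<rho> u" for u k l
  proof (cases "k = l")
    case False thus ?thesis using h1 by blast
  next
    case True
    obtain j where j: "j \<noteq> k" using other_idx[OF c2] by blast
    have "\<rho> (u + unitv k + unitv k) = \<rho> ((u + unitv k - unitv j) + unitv k + unitv j)"
      by (simp add: algebra_simps)
    also have "\<dots> = \<rho> (u + unitv k - unitv j)" using h1 j by metis
    also have "\<dots> = \<rho> ((u - unitv j) + unitv k)" by (simp add: algebra_simps)
    also have "\<dots> = \<rho> ((u - unitv j) + unitv j)" using F by blast
    finally show ?thesis using True by simp
  qed
  define a where "a = \<rho> 0"
  define b where "b = \<rho> (unitv i0)"
  have bm: "black (u - unitv k) \<longleftrightarrow> \<not> black u" for u :: "int^'m" and k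
    using black_add[of "u - unitv k" k] by simp
  have "\<rho> u = (if black u then a else b) \<and> (\<forall>k. \<rho> (u + unitv k) = (if black u then b else a))" for u
  proof (induction u rule: lat_induct)
    case 1
    have "\<rho> (0 + unitv k) = b" for k unfolding b_def using F[of 0 k i0] by simp
    thus ?case unfolding a_def by (simp add: black0)
  next
    case (2 u i)
    have "\<rho> (u + unitv i + unitv k) = \<rho> u" for k using E .
    thus ?case using 2 black_add[of u i] by auto
  next
    case (3 u i)
    have r1: "\<rho> (u - unitv i) = \<rho> (u + unitv i)"
      using E[of "u - unitv i" i i] by (simp add: algebra_simps)
    have r2: "\<rho> (u - unitv i + unitv k) = \<rho> u" for k
      using F[of "u - unitv i" k i] by simp
    show ?case using 3 r1 r2 bm[of u i] by auto
  qed
  thus ?thesis unfolding a_def b_def by blast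
qed



lemma quad_vals:
  assumes "qrep A B C D M x y a1 a2 b1 b2"
  shows "diag_point A B C D = M \<and> len_ratio M C A = a2/a1 \<and> len_ratio M D B = b2/b1"
proof -
  note qq = assms[unfolded qrep_def]
  have "x \<noteq> 0" "y \<noteq> 0" using ind2_nz qq by auto
  thus ?thesis using qrep_diag[OF assms] len_ratio_val qq by auto
qed

lemma qnet_rep:
  assumes "qnet f" "i \<noteq> j"
  shows "\<exists>M x y a1 a2 b1 b2. qrep (f u) (f (u + unitv i)) (f (u + unitv i + unitv j)) (f (u + unitv j)) M x y a1 a2 b1 b2"
  using assms nondeg_rep unfolding qnet_def by blast

lemma nu_cond_iff:
  assumes qf: "qnet f"
  shows "nu_cond f \<nu> \<longleftrightarrow> (\<forall>u. \<nu> u \<noteq> 0) \<and> (\<forall>u i j. i \<noteq> j \<longrightarrow> (\<forall>M x y a1 a2 b1 b2.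
     qrep (f u) (f (u + unitv i)) (f (u + unitv i + unitv j)) (f (u + unitv j)) M x y a1 a2 b1 b2 \<longrightarrow>
       \<nu> (u + unitv i + unitv j) / \<nu> u = a2/a1 \<and> \<nu> (u + unitv j) / \<nu> (u + unitv i) = b2/b1))"
proof -
  have key: "(\<nu> (u + unitv i + unitv j) / \<nu> u = len_ratio (diag_point (f u) (f (u + unitv i)) (f (u + unitv i + unitv j)) (f (u + unitv j))) (f (u + unitv i + unitv j)) (f u) \<and>
            \<nu> (u + unitv j) / \<nu> (u + unitv i) = len_ratio (diag_point (f u) (f (u + unitv i)) (f (u + unitv i + unitv j)) (f (u + unitv j))) (f (u + unitv j)) (f (u + unitv i)))
     \<longleftrightarrow> (\<forall>M x y a1 a2 b1 b2.
     qrep (f u) (f (u + unitv i)) (f (u + unitv i + unitv j)) (f (u + unitv j)) M x y a1 a2 b1 b2 \<longrightarrow>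
       \<nu> (u + unitv i + unitv j) / \<nu> u = a2/a1 \<and> \<nu> (u + unitv j) / \<nu> (u + unitv i) = b2/b1)"
    if ij: "i \<noteq> j" for u i j
  proof -
    obtain M x y a1 a2 b1 b2 where r: "qrep (f u) (f (u + unitv i)) (f (u + unitv i + unitv j)) (f (u + unitv j)) M x y a1 a2 b1 b2"
      using qnet_rep[OF qf ij] by blast
    show ?thesis
    proof
      assume h: "\<nu> (u + unitv i + unitv j) / \<nu> u = len_ratio (diag_point (f u) (f (u + unitv i)) (f (u + unitv i + unitv j)) (f (u + unitv j))) (f (u + unitv i + unitv j)) (f u) \<and>
            \<nu> (u + unitv j) / \<nu> (u + unitv i) = len_ratio (diag_point (f u) (f (u + unitv i)) (f (u + unitv i + unitv j)) (f (u + unitv j))) (f (u + unitv j)) (f (u + unitv i))"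
      show "\<forall>M x y a1 a2 b1 b2.
         qrep (f u) (f (u + unitv i)) (f (u + unitv i + unitv j)) (f (u + unitv j)) M x y a1 a2 b1 b2 \<longrightarrow>
         \<nu> (u + unitv i + unitv j) / \<nu> u = a2/a1 \<and> \<nu> (u + unitv j) / \<nu> (u + unitv i) = b2/b1"
        using h quad_vals by metis
    next
      assume "\<forall>M x y a1 a2 b1 b2.
         qrep (f u) (f (u + unitv i)) (f (u + unitv i + unitv j)) (f (u + unitv j)) M x y a1 a2 b1 b2 \<longrightarrow>
         \<nu> (u + unitv i + unitv j) / \<nu> u = a2/a1 \<and> \<nu> (u + unitv j) / \<nu> (u + unitv i) = b2/b1"
      from this[rule_format, OF r] show "\<nu> (u + unitv i + unitv j) / \<nu> u = len_ratio (diag_point (f u) (f (u + unitv i)) (f (u + unitv i + unitv j)) (f (u + unitv j))) (f (u + unitv i + unitv j)) (f u) \<and>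
            \<nu> (u + unitv j) / \<nu> (u + unitv i) = len_ratio (diag_point (f u) (f (u + unitv i)) (f (u + unitv i + unitv j)) (f (u + unitv j))) (f (u + unitv j)) (f (u + unitv i))"
        using quad_vals[OF r] by simp
    qed
  qed
  show ?thesis unfolding nu_cond_def Let_def using key by auto
qed


lemma par_nz:
  assumes "parallel X Y" "X \<noteq> 0" "Y \<noteq> 0"
  shows "\<exists>c. c \<noteq> 0 \<and> X = c *\<^sub>R Y"
proof -
  obtain c where "X = c *\<^sub>R Y \<or> Y = c *\<^sub>R X" using assms(1) unfolding parallel_def by blast
  thus ?thesis
  proof
    assume h: "X = c *\<^sub>R Y"
    hence "c \<noteq> 0" using assms(2) by auto
    thus ?thesis using h by blast
  next
    assume h: "Y = c *\<^sub>R X"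
    hence c: "c \<noteq> 0" using assms(3) by auto
    have "X = (1/c) *\<^sub>R Y" using h c by simp
    moreover have "1/c \<noteq> 0" using c by simp
    ultimately show ?thesis by blast
  qed
qed

lemma ratio_alg:
  fixes n ni nj nij ci cj cji a1 a2 b1 b2 :: real
  assumes "ci \<noteq> 0" "cj \<noteq> 0" "cji \<noteq> 0" "a1 \<noteq> 0" "b1 \<noteq> 0"
    and "n * ni = 1/ci" "ni * nij = 1/cji" "n * nj = 1/cj"
    and "cji * a2 = ci * a1" "cj * b2 = ci * b1"
  shows "nij / n = a2 / a1 \<and> nj / ni = b2 / b1"
proof -
  have n: "n \<noteq> 0" "ni \<noteq> 0" using assms(1,6) by auto
  have "nij / n = (ni * nij) / (n * ni)" using n by simp
  also have "\<dots> = (1/cji) / (1/ci)" using assms(6,7) by simp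
  also have "\<dots> = ci / cji" by simp
  also have "\<dots> = a2 / a1" using assms by (simp add: field_simps)
  finally have 1: "nij / n = a2 / a1" .
  have "nj / ni = (n * nj) / (n * ni)" using n by simp
  also have "\<dots> = (1/cj) / (1/ci)" using assms(6,8) by simp
  also have "\<dots> = ci / cj" by simp
  also have "\<dots> = b2 / b1" using assms by (simp add: field_simps)
  finally show ?thesis using 1 by simp
qed

lemma uvw: "(u::int^'m) + unitv j + unitv i = u + unitv i + unitv j"
  by (simp add: algebra_simps)

lemma koenigs_imp_nu:
  fixes f :: "int ^ 'm::finite \<Rightarrow> real ^ 'n::finite"
  assumes c2: "CARD('m) \<ge> 2" and qf: "qnet f" and kf: "koenigs f"
  shows "\<exists>\<nu>. nu_cond f \<nu>"
proof -
  obtain fs :: "int ^ 'm \<Rightarrow> real ^ 'n" where qs: "qnet fs" and dq: "\<forall>u i j. i \<noteq> j \<longrightarrow>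
        dual_quad (f u) (f (u + unitv i)) (f (u + unitv i + unitv j)) (f (u + unitv j))
                  (fs u) (fs (u + unitv i)) (fs (u + unitv i + unitv j)) (fs (u + unitv j))"
    using kf unfolding koenigs_def by blast
  have edge: "fs (u + unitv i) - fs u \<noteq> 0 \<and> f (u + unitv i) - f u \<noteq> 0 \<and> parallel (fs (u + unitv i) - fs u) (f (u + unitv i) - f u)" for u i
  proof -
    obtain j where j: "j \<noteq> i" using other_idx[OF c2] by blast
    have "nondeg_quad (fs u) (fs (u + unitv i)) (fs (u + unitv i + unitv j)) (fs (u + unitv j))"
      using qs j unfolding qnet_def by auto
    hence 1: "fs (u + unitv i) - fs u \<noteq> 0" unfolding nondeg_quad_def by auto
    have "nondeg_quad (f u) (f (u + unitv i)) (f (u + unitv i + unitv j)) (f (u + unitv j))"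
      using qf j unfolding qnet_def by auto
    hence 2: "f (u + unitv i) - f u \<noteq> 0" unfolding nondeg_quad_def by auto
    have "dual_quad (f u) (f (u + unitv i)) (f (u + unitv i + unitv j)) (f (u + unitv j))
                  (fs u) (fs (u + unitv i)) (fs (u + unitv i + unitv j)) (fs (u + unitv j))"
      using dq[rule_format, of i j u] j by auto
    hence "parallel (fs (u + unitv i) - fs u) (f (u + unitv i) - f u)"
      unfolding dual_quad_def by blast
    thus ?thesis using 1 2 by blast
  qed
  define c where "c i u = (SOME c. c \<noteq> 0 \<and> fs (u + unitv i) - fs u = c *\<^sub>R (f (u + unitv i) - f u))" for i u
  have cp: "c i u \<noteq> 0 \<and> fs (u + unitv i) - fs u = c i u *\<^sub>R (f (u + unitv i) - f u)" for i u
  proof -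
    have "\<exists>c. c \<noteq> 0 \<and> fs (u + unitv i) - fs u = c *\<^sub>R (f (u + unitv i) - f u)"
      using par_nz edge[of u i] by blast
    thus ?thesis unfolding c_def by (rule someI_ex)
  qed
  have rel: "c j (u + unitv i) * a2 = c i u * a1 \<and> c i (u + unitv j) * a2 = c j u * a1 \<and> c j u * b2 = c i u * b1"
    if ij: "i \<noteq> j" and r: "qrep (f u) (f (u + unitv i)) (f (u + unitv i + unitv j)) (f (u + unitv j)) M x y a1 a2 b1 b2"
    for u i j M x y a1 a2 b1 b2
  proof -
    have d: "dual_quad (f u) (f (u + unitv i)) (f (u + unitv i + unitv j)) (f (u + unitv j))
                  (fs u) (fs (u + unitv i)) (fs (u + unitv i + unitv j)) (fs (u + unitv j))"
      using dq ij by blast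
    have e2: "fs (u + unitv i + unitv j) - fs (u + unitv i) = c j (u + unitv i) *\<^sub>R (f (u + unitv i + unitv j) - f (u + unitv i))"
      using cp[of j "u + unitv i"] by simp
    have e4: "fs (u + unitv i + unitv j) - fs (u + unitv j) = c i (u + unitv j) *\<^sub>R (f (u + unitv i + unitv j) - f (u + unitv j))"
      using cp[of i "u + unitv j"] by (simp add: uvw)
    show ?thesis
      apply (rule fwd_quad[OF r, where A'="fs u" and B'="fs (u + unitv i)" and C'="fs (u + unitv i + unitv j)" and D'="fs (u + unitv j)"])
      using cp[of i u] apply simp
      using e2 apply simp
      using cp[of j u] apply simp
      using e4 apply simp
      using d unfolding dual_quad_def apply blast
      using d unfolding dual_quad_def apply blast
      done
  qed
  have cnz: "c i u \<noteq> 0" for i u using cp by blast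
  define W where "W i u = (if black u then c i u else 1 / c i u)" for i u
  have Wnz: "W i u \<noteq> 0" for i u unfolding W_def using cnz by simp
  have Wc: "W i u * W j (u + unitv i) = W j u * W i (u + unitv j)" for u i j
  proof (cases "i = j")
    case True thus ?thesis by simp
  next
    case False
    obtain M x y a1 a2 b1 b2 where r: "qrep (f u) (f (u + unitv i)) (f (u + unitv i + unitv j)) (f (u + unitv j)) M x y a1 a2 b1 b2"
      using qnet_rep[OF qf False] by blast
    have a2: "a2 \<noteq> 0" using r unfolding qrep_def by blast
    note rr = rel[OF False r]
    have key: "c i u * c i (u + unitv j) = c j u * c j (u + unitv i)"
    proof -
      have "c i u * c i (u + unitv j) * a2 = c i u * (c j u * a1)" using rr by simp
      also have "\<dots> = c j u * (c i u * a1)" by simp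
      also have "\<dots> = c j u * c j (u + unitv i) * a2" using rr by simp
      finally show ?thesis using a2 by simp
    qed
    show ?thesis
      unfolding W_def black_add using key cnz
      by (auto simp: field_simps)
  qed
  obtain \<mu> where mnz: "\<forall>u. \<mu> u \<noteq> 0" and mu: "\<forall>u i. \<mu> (u + unitv i) = \<mu> u * W i u"
    using mult_potential[of W, OF Wnz Wc] by blast
  define \<nu> where "\<nu> u = (if black u then \<mu> u else 1 / \<mu> u)" for u
  have nnz: "\<nu> u \<noteq> 0" for u unfolding \<nu>_def using mnz by simp
  have nn: "\<nu> u * \<nu> (u + unitv i) = 1 / c i u" for u i
    unfolding \<nu>_def black_add using mu mnz cnz[of i u] unfolding W_def
    by (auto simp: field_simps)
  have "nu_cond f \<nu>"
    unfolding nu_cond_iff[OF qf]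
  proof (rule conjI[OF allI[OF nnz]], intro allI impI)
    fix u i j M x y a1 a2 b1 b2
    assume ij: "i \<noteq> j" and r: "qrep (f u) (f (u + unitv i)) (f (u + unitv i + unitv j)) (f (u + unitv j)) M x y a1 a2 b1 b2"
    note rr = rel[OF ij r]
    have nz: "a1 \<noteq> 0" "b1 \<noteq> 0" using r unfolding qrep_def by auto
    show "\<nu> (u + unitv i + unitv j) / \<nu> u = a2 / a1 \<and> \<nu> (u + unitv j) / \<nu> (u + unitv i) = b2 / b1"
      using ratio_alg[OF cnz[of i u] cnz[of j u] cnz[of j "u + unitv i"] nz nn[of u i] nn[of "u + unitv i" j] nn[of u j]] rr
      by blast
  qed
  thus ?thesis by blast
qed


lemma nu_imp_koenigs:
  fixes f :: "int ^ 'm::finite \<Rightarrow> real ^ 'n::finite"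
  assumes qf: "qnet f" and nc: "nu_cond f \<nu>"
  shows "koenigs f"
proof -
  note N = nc[unfolded nu_cond_iff[OF qf]]
  have nnz: "\<nu> u \<noteq> 0" for u using N by blast
  have rat: "\<nu> (u + unitv i + unitv j) / \<nu> u = a2 / a1 \<and> \<nu> (u + unitv j) / \<nu> (u + unitv i) = b2 / b1"
    if "i \<noteq> j" "qrep (f u) (f (u + unitv i)) (f (u + unitv i + unitv j)) (f (u + unitv j)) M x y a1 a2 b1 b2"
    for u i j M x y a1 a2 b1 b2
    using N that by blast
  define w where "w i u = (1 / (\<nu> u * \<nu> (u + unitv i))) *\<^sub>R (f (u + unitv i) - f u)" for i u
  have BQ: "fs (u + unitv i + unitv j) = fs (u + unitv j) + (1/(\<nu> (u + unitv j) * \<nu> (u + unitv i + unitv j))) *\<^sub>R (f (u + unitv i + unitv j) - f (u + unitv j)) \<and>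
      nondeg_quad (fs u) (fs (u + unitv i)) (fs (u + unitv i + unitv j)) (fs (u + unitv j)) \<and>
      dual_quad (f u) (f (u + unitv i)) (f (u + unitv i + unitv j)) (f (u + unitv j))
                (fs u) (fs (u + unitv i)) (fs (u + unitv i + unitv j)) (fs (u + unitv j))"
    if ij: "i \<noteq> j" and eB: "fs (u + unitv i) = fs u + w i u" and eC: "fs (u + unitv i + unitv j) = fs (u + unitv i) + w j (u + unitv i)"
      and eD: "fs (u + unitv j) = fs u + w j u"
    for fs :: "int ^ 'm \<Rightarrow> real ^ 'n" and u i j
  proof -
    obtain M x y a1 a2 b1 b2 where r: "qrep (f u) (f (u + unitv i)) (f (u + unitv i + unitv j)) (f (u + unitv j)) M x y a1 a2 b1 b2"
      using qnet_rep[OF qf ij] by blast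
    note rr = rat[OF ij r]
    show ?thesis
      by (rule bwd_quad[OF r nnz nnz nnz nnz conjunct1[OF rr] conjunct2[OF rr]])
        (use eB eC eD in \<open>simp_all add: w_def\<close>)
  qed
  have coc: "w i u + w j (u + unitv i) = w j u + w i (u + unitv j)" for u i j
  proof (cases "i = j")
    case True thus ?thesis by simp
  next
    case False
    define g where "g v = (if v = u + unitv i then w i u else if v = u + unitv i + unitv j then w i u + w j (u + unitv i)
       else if v = u + unitv j then w j u else 0)" for v
    have d1: "u + unitv i \<noteq> u + unitv i + unitv j" "u + unitv j \<noteq> u + unitv i + unitv j"
      by (auto simp: unitv_def vec_eq_iff axis_def)
    have d2: "u + unitv i \<noteq> u + unitv j" using False by (auto simp: unitv_def vec_eq_iff axis_def)
    have d3: "u + unitv i \<noteq> u" "u + unitv j \<noteq> u" "u + unitv i + unitv j \<noteq> u"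
      by (auto simp: unitv_def vec_eq_iff axis_def)
    have "g (u + unitv i + unitv j) = g (u + unitv j) + (1/(\<nu> (u + unitv j) * \<nu> (u + unitv i + unitv j))) *\<^sub>R (f (u + unitv i + unitv j) - f (u + unitv j))"
      by (rule conjunct1[OF BQ[OF False]]) (use d1 d2 d3 in \<open>simp_all add: g_def\<close>)
    hence "w i u + w j (u + unitv i) = w j u + (1/(\<nu> (u + unitv j) * \<nu> (u + unitv i + unitv j))) *\<^sub>R (f (u + unitv i + unitv j) - f (u + unitv j))"
      using d1 d2 d3 by (simp add: g_def)
    thus ?thesis unfolding w_def[of i "u + unitv j"] by (simp add: uvw)
  qed
  obtain fs where fs: "\<forall>u i. fs (u + unitv i) = fs u + w i u"
    using potential[of w, OF coc] by blast
  have "qnet fs \<and> (\<forall>u i j. i \<noteq> j \<longrightarrow>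
        dual_quad (f u) (f (u + unitv i)) (f (u + unitv i + unitv j)) (f (u + unitv j))
                  (fs u) (fs (u + unitv i)) (fs (u + unitv i + unitv j)) (fs (u + unitv j)))"
    unfolding qnet_def using BQ fs by blast
  thus ?thesis unfolding koenigs_def by blast
qed


lemma uniq1:
  fixes f :: "int ^ 'm::finite \<Rightarrow> real ^ 'n::finite"
  assumes c2: "CARD('m) \<ge> 2" and qf: "qnet f" and n1: "nu_cond f \<nu>" and n2: "nu_cond f \<nu>'"
  shows "\<exists>a b. a \<noteq> 0 \<and> b \<noteq> 0 \<and> (\<forall>u. \<nu>' u = (if black u then a else b) * \<nu> u)"
proof -
  note N1 = n1[unfolded nu_cond_iff[OF qf]] and N2 = n2[unfolded nu_cond_iff[OF qf]]
  have z1: "\<nu> u \<noteq> 0" and z2: "\<nu>' u \<noteq> 0" for u using N1 N2 by blast+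
  define \<rho> where "\<rho> u = \<nu>' u / \<nu> u" for u
  have rr: "\<rho> (u + unitv i + unitv j) = \<rho> u \<and> \<rho> (u + unitv j) = \<rho> (u + unitv i)" if ij: "i \<noteq> j" for u i j
  proof -
    obtain M x y a1 a2 b1 b2 where r: "qrep (f u) (f (u + unitv i)) (f (u + unitv i + unitv j)) (f (u + unitv j)) M x y a1 a2 b1 b2"
      using qnet_rep[OF qf ij] by blast
    have e1: "\<nu> (u + unitv i + unitv j) / \<nu> u = \<nu>' (u + unitv i + unitv j) / \<nu>' u"
      using N1 N2 ij r by metis
    have e2: "\<nu> (u + unitv j) / \<nu> (u + unitv i) = \<nu>' (u + unitv j) / \<nu>' (u + unitv i)"
      using N1 N2 ij r by metis
    show ?thesis unfolding \<rho>_def using e1 e2 z1 z2 by (simp add: field_simps)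
  qed
  have P: "\<forall>u. \<rho> u = (if black u then \<rho> 0 else \<rho> (unitv undefined))"
    by (rule parity[OF c2]) (use rr in blast)+
  show ?thesis
  proof (intro exI conjI allI)
    show "\<rho> 0 \<noteq> 0" "\<rho> (unitv undefined) \<noteq> 0" unfolding \<rho>_def using z1 z2 by simp_all
    fix u show "\<nu>' u = (if black u then \<rho> 0 else \<rho> (unitv undefined)) * \<nu> u"
      using P[rule_format, of u] z1[of u] unfolding \<rho>_def[of u] by (simp add: field_simps)
  qed
qed

lemma uniq2:
  fixes f :: "int ^ 'm::finite \<Rightarrow> real ^ 'n::finite"
  assumes qf: "qnet f" and n1: "nu_cond f \<nu>" and ab: "a \<noteq> 0" "b \<noteq> 0"
    and nu': "\<forall>u. \<nu>' u = (if black u then a else b) * \<nu> u"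
  shows "nu_cond f \<nu>'"
proof -
  note N1 = n1[unfolded nu_cond_iff[OF qf]]
  have z1: "\<nu> u \<noteq> 0" for u using N1 by blast
  define k where "k (u::int^'m) = (if black u then a else b)" for u
  have kz: "k u \<noteq> 0" for u unfolding k_def using ab by simp
  have k1: "k (u + unitv i + unitv j) = k u" and k2: "k (u + unitv j) = k (u + unitv i)" for u i j
    unfolding k_def black_add by simp_all
  have nu'k: "\<nu>' u = k u * \<nu> u" for u using nu' k_def by simp
  show ?thesis
    unfolding nu_cond_iff[OF qf]
  proof (rule conjI)
    show "\<forall>u. \<nu>' u \<noteq> 0" using nu'k kz z1 by simp
  next
    show "\<forall>u i j. i \<noteq> j \<longrightarrow> (\<forall>M x y a1 a2 b1 b2.
     qrep (f u) (f (u + unitv i)) (f (u + unitv i + unitv j)) (f (u + unitv j)) M x y a1 a2 b1 b2 \<longrightarrow>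
       \<nu>' (u + unitv i + unitv j) / \<nu>' u = a2/a1 \<and> \<nu>' (u + unitv j) / \<nu>' (u + unitv i) = b2/b1)"
    proof (intro allI impI)
      fix u i j M x y a1 a2 b1 b2
      assume "i \<noteq> j" "qrep (f u) (f (u + unitv i)) (f (u + unitv i + unitv j)) (f (u + unitv j)) M x y a1 a2 b1 b2"
      hence h: "\<nu> (u + unitv i + unitv j) / \<nu> u = a2/a1 \<and> \<nu> (u + unitv j) / \<nu> (u + unitv i) = b2/b1"
        using N1 by blast
      have kk: "k (u + unitv j) = k (u + unitv i)" unfolding k_def black_add by simp
      have "\<nu>' (u + unitv i + unitv j) / \<nu>' u = \<nu> (u + unitv i + unitv j) / \<nu> u"
        unfolding nu'k k1 using kz[of u] by simp
      moreover have "\<nu>' (u + unitv j) / \<nu>' (u + unitv i) = \<nu> (u + unitv j) / \<nu> (u + unitv i)"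
        unfolding nu'k kk using kz[of "u + unitv i"] by simp
      ultimately show "\<nu>' (u + unitv i + unitv j) / \<nu>' u = a2/a1 \<and> \<nu>' (u + unitv j) / \<nu>' (u + unitv i) = b2/b1"
        using h by simp
    qed
  qed
qed

theorem mainTheorem7:
  fixes f :: "int ^ 'm::finite \<Rightarrow> real ^ 'n::finite"
  assumes "CARD('n) \<ge> 3" and "CARD('m) \<ge> 2" and "qnet f"
  shows "(koenigs f \<longleftrightarrow> (\<exists>\<nu>. nu_cond f \<nu>)) \<and>
         (\<forall>\<nu> \<nu>'. nu_cond f \<nu> \<longrightarrow>
            (nu_cond f \<nu>' \<longleftrightarrow>
              (\<exists>a b. a \<noteq> 0 \<and> b \<noteq> 0 \<and> (\<forall>u. \<nu>' u = (if black u then a else b) * \<nu> u))))"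
  using koenigs_imp_nu[OF assms(2,3)] nu_imp_koenigs[OF assms(3)] uniq1[OF assms(2,3)] uniq2[OF assms(3)]
  by blast


end
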